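(* Let $\delta\in\mathcal D^0$ and let $C$ be an absolutely continuous copula with multidiagonal $\delta$ and density $c$. Then $c(u)\mathbf 1_{Z_\delta}(u)=0$ for a.e. $u\in I^d$, where $Z_\delta=\{u\in I^d:\ \delta'_{(i)}(u_{(i)})=0\text{ for some }1\le i\le d\}$.
   Context: $I=[0,1]$; $u_{(1)}\le\dots\le u_{(d)}$ denote the ordered coordinates of $u$. A copula is a cdf on $\mathbb R^d$ with uniform-on-$I$ coordinates. For a copula $C$ and $U\sim C$ with order statistics $U_{(i)}$, the multidiagonal is $(\delta_{(i)})$ with $\delta_{(i)}(t)=\mathbb P(U_{(i)}\le t)$; each $\delta_{(i)}$ is Lipschitz, hence differentiable a.e. $\mathcal D^0$ is the set of multidiagonals of absolutely continuous copulas. *)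

theory Defs
  imports "HOL-Probability.Probability" "HOL-Library.Multiset"
begin

text \<open>Points of R^d are vectors of type real^'d; d = CARD('d).
  Order statistics: ord_stat u i is the i-th smallest coordinate of u, for 1 \<le> i \<le> d.\<close>

definition ord_stat :: "real ^ 'd \<Rightarrow> nat \<Rightarrow> real" where
  "ord_stat u i = sorted_list_of_multiset (image_mset (\<lambda>k. u $ k) (mset_set (UNIV :: 'd set))) ! (i - 1)"

definition unit_cube :: "(real ^ 'd) set" where
  "unit_cube = {u. \<forall>k. 0 \<le> u $ k \<and> u $ k \<le> 1}"

definition copula_measure :: "(real ^ 'd \<Rightarrow> real) \<Rightarrow> (real ^ 'd) measure \<Rightarrow> bool" where
  "copula_measure C M \<longleftrightarrow> prob_space M \<and> sets M = sets borel \<and>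
     (\<forall>x. C x = measure M {u. \<forall>k. u $ k \<le> x $ k}) \<and>
     (\<forall>k t. measure M {u. u $ k \<le> t} = max 0 (min t 1))"

definition is_copula :: "(real ^ 'd \<Rightarrow> real) \<Rightarrow> bool" where
  "is_copula C \<longleftrightarrow> (\<exists>M. copula_measure C M)"

definition copula_density :: "(real ^ 'd \<Rightarrow> real) \<Rightarrow> (real ^ 'd \<Rightarrow> real) \<Rightarrow> bool" where
  "copula_density C c \<longleftrightarrow> c \<in> borel_measurable lborel \<and> (AE u in lborel. 0 \<le> c u) \<and>
     (\<forall>x. ennreal (C x) = (\<integral>\<^sup>+ u \<in> {u. \<forall>k. u $ k \<le> x $ k}. ennreal (c u) \<partial>lborel))"

definition is_multidiagonal :: "(real ^ 'd \<Rightarrow> real) \<Rightarrow> (nat \<Rightarrow> real \<Rightarrow> real) \<Rightarrow> bool" where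
  "is_multidiagonal C \<delta> \<longleftrightarrow> (\<exists>M. copula_measure C M \<and>
     (\<forall>i\<in>{1..CARD('d)}. \<forall>t. \<delta> i t = measure M {u. ord_stat u i \<le> t}))"

text \<open>Z_delta: points of I^d where some delta_(i) has derivative 0 at u_(i)
  (derivative taken where it exists; the non-differentiability set is null).\<close>
definition Z_set :: "(nat \<Rightarrow> real \<Rightarrow> real) \<Rightarrow> (real ^ 'd) set" where
  "Z_set \<delta> = {u \<in> unit_cube. \<exists>i\<in>{1..CARD('d)}. (\<delta> i has_real_derivative 0) (at (ord_stat u i))}"

end

theory Submission
  imports Defs
begin


lemma pit_core:
  fixes F :: "real \<Rightarrow> real"
  assumes mono: "\<And>x y. x \<le> y \<Longrightarrow> F x \<le> F y"
    and cont: "continuous_on UNIV F"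
    and bot: "(F \<longlongrightarrow> 0) at_bot" and top: "(F \<longlongrightarrow> 1) at_top"
    and p: "0 < p" "p < 1"
  obtains s where "F s = p" "\<And>x. F x \<le> p \<longleftrightarrow> x \<le> s"
proof -
  define S where "S = {t. F t \<le> p}"
  have "\<forall>\<^sub>F t in at_bot. F t < p" using order_tendstoD(2)[OF bot p(1)] .
  then obtain t0 where "F t0 < p" by (metis eventually_at_bot_linorder order_refl)
  then have ne: "S \<noteq> {}" unfolding S_def by (auto intro!: exI[of _ t0])
  have "\<forall>\<^sub>F t in at_top. F t > p" using order_tendstoD(1)[OF top p(2)] .
  then obtain T where T: "\<And>t. t \<ge> T \<Longrightarrow> F t > p" by (auto simp: eventually_at_top_linorder)
  have bdd: "bdd_above S" unfolding S_def bdd_above_def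
    by (metis T linorder_not_le mem_Collect_eq less_imp_le not_less)
  have cl: "closed S" unfolding S_def
    using closed_Collect_le[OF cont continuous_on_const] by simp
  define s where "s = Sup S"
  have sS: "s \<in> S" using closed_contains_Sup[OF ne bdd cl] s_def by simp
  have "F s \<ge> p"
  proof (rule ccontr)
    assume "\<not> F s \<ge> p"
    then have "F s < p" by simp
    have "isCont F s" using cont by (simp add: continuous_on_eq_continuous_at)
    then have "\<forall>\<^sub>F x in at_right s. F x < p"
      using \<open>F s < p\<close> by (metis continuous_at_split continuous_within order_tendstoD(2))
    then obtain x where "x > s" "F x < p"
      by (metis eventually_at_right_field zero_less_one less_add_one dense)
    then show False using cSup_upper[OF _ bdd, of x] s_def S_def by auto
  qed
  then have Fs: "F s = p" using sS S_def by auto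
  have "F x \<le> p \<longleftrightarrow> x \<le> s" for x
  proof
    assume "F x \<le> p" then show "x \<le> s" using cSup_upper[OF _ bdd, of x] s_def S_def by auto
  next
    assume "x \<le> s" then show "F x \<le> p" using mono Fs by metis
  qed
  then show ?thesis using that Fs by blast
qed

lemma (in prob_space) pit:
  fixes X :: "'a \<Rightarrow> real"
  assumes X[measurable]: "X \<in> borel_measurable M"
    and Fdef: "\<And>t. F t = measure M {u\<in>space M. X u \<le> t}"
    and cont: "continuous_on UNIV F"
  shows "distributed M lborel (\<lambda>u. F (X u)) (\<lambda>x. indicator {0..1} x / measure lborel {0..1::real})"
proof -
  define \<nu> where "\<nu> = distr M borel X"
  have rd: "real_distribution \<nu>" unfolding \<nu>_def by simp
  interpret rd: real_distribution \<nu> by (rule rd)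
  have cdfF: "cdf \<nu> = F"
    unfolding fun_eq_iff cdf_def \<nu>_def Fdef
    by (auto simp: measure_distr vimage_def Int_def conj_commute)
  have mono: "\<And>x y. x \<le> y \<Longrightarrow> F x \<le> F y"
    using rd.cdf_nondecreasing cdfF by metis
  have bot: "(F \<longlongrightarrow> 0) at_bot" using rd.cdf_lim_at_bot cdfF by simp
  have top: "(F \<longlongrightarrow> 1) at_top" using rd.cdf_lim_at_top_prob cdfF by simp
  have F01: "0 \<le> F x" "F x \<le> 1" for x
    using rd.cdf_nonneg rd.cdf_bounded_prob cdfF by metis+
  have Fm[measurable]: "F \<in> borel_measurable borel"
    using borel_measurable_mono mono unfolding mono_def by blast
  have mid: "\<P>(x in M. F (X x) \<le> t) = t" if tt: "0 < t" "t < 1" for t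
  proof -
    obtain s where s: "F s = t" "\<And>x. F x \<le> t \<longleftrightarrow> x \<le> s"
      using pit_core[OF mono cont bot top tt] by blast
    then show ?thesis using Fdef[of s] by simp
  qed
  show ?thesis
  proof (rule uniform_distrI_borel_atLeastAtMost)
    fix t :: real assume t: "0 \<le> t" "t \<le> 1"
    consider "t = 0" | "0 < t \<and> t < 1" | "t = 1" using t by linarith
    then show "\<P>(x in M. F (X x) \<le> t) = (t - 0) / (1 - 0)"
    proof cases
      case 1
      have le: "\<P>(x in M. F (X x) \<le> 0) \<le> e" if "0 < e" "e < 1" for e
      proof -
        have "\<P>(x in M. F (X x) \<le> 0) \<le> \<P>(x in M. F (X x) \<le> e)"
          using that by (intro finite_measure_mono) auto
        then show ?thesis using mid[OF that] by simp
      qed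
      have "\<P>(x in M. F (X x) \<le> 0) \<le> 0"
      proof (rule ccontr)
        assume "\<not> ?thesis"
        then have pos: "\<P>(x in M. F (X x) \<le> 0) > 0" by simp
        have "\<P>(x in M. F (X x) \<le> 0) \<le> min (\<P>(x in M. F (X x) \<le> 0)/2) (1/2)"
        proof (rule le)
          have "\<P>(x in M. F (X x) \<le> 0) \<le> 1" by simp
          then show "min (\<P>(x in M. F (X x) \<le> 0)/2) (1/2) < 1" by linarith
        qed (use pos in auto)
        then show False using pos by linarith
      qed
      then show ?thesis using 1 measure_nonneg[of M] by (simp add: antisym)
    next
      case 2 then show ?thesis using mid by simp
    next
      case 3
      have "{x \<in> space M. F (X x) \<le> 1} = space M" using F01 by auto
      then show ?thesis using 3 prob_space by simp
    qed
  qed (auto)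
qed

lemma rank_zero_1: "rank (matrix (\<lambda>h::real^1. (0::real) *\<^sub>R h)) < CARD(1)"
  by (metis CARD_1 det_eq_0_rank det_matrix_scaleR power_one_right)

lemma sard1:
  fixes F :: "real \<Rightarrow> real"
  shows "negligible (F ` {t. (F has_real_derivative 0) (at t)})"
proof -
  define N where "N = {t. (F has_real_derivative 0) (at t)}"
  define g :: "real^1 \<Rightarrow> real^1" where "g = (\<lambda>x. vec (F (x$1)))"
  have der: "(g has_derivative (\<lambda>h. (0::real) *\<^sub>R h)) (at x within vec ` N)" if xN: "x \<in> vec ` N" for x
  proof -
    obtain a where a: "a \<in> N" "x = vec a" using xN by auto
    have "(F has_derivative (\<lambda>y. y * (\<lambda>_. (0::real)) a)) (at a within N)"
    proof -
      have "(F has_derivative (*) 0) (at a)" using a(1) unfolding N_def has_field_derivative_def by simp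
      moreover have "((*) (0::real)) = (\<lambda>y. y * (\<lambda>_. (0::real)) a)" by auto
      ultimately show ?thesis by (metis has_derivative_at_withinI)
    qed
    moreover have "((*\<^sub>R) (0::real)) = (\<lambda>h::real^1. 0)" by auto
    ultimately show ?thesis using has_derivative_vector_1 a unfolding g_def by fastforce
  qed
  have ng: "negligible (g ` (vec ` N))"
    by (rule baby_Sard[OF _ der rank_zero_1]) simp_all
  have neg: "negligible ((\<lambda>y. y$1) ` (g ` (vec ` N)))"
    by (rule negligible_differentiable_image_negligible[OF _ ng])
       (auto intro!: bounded_linear_imp_differentiable_on bounded_linear_vec_nth)
  have "F ` N \<subseteq> (\<lambda>y. y$1) ` (g ` (vec ` N))"
    unfolding g_def by (auto simp: image_image)
  then show ?thesis using negligible_subset neg N_def by metis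
qed

lemma (in prob_space) deriv_zero_null:
  fixes X :: "'a \<Rightarrow> real"
  assumes X[measurable]: "X \<in> borel_measurable M"
    and Fdef: "\<And>t. F t = measure M {u\<in>space M. X u \<le> t}"
    and cont: "continuous_on UNIV F"
  shows "AE u in M. \<not> (F has_real_derivative 0) (at (X u))"
proof -
  define N where "N = {t. (F has_real_derivative 0) (at t)}"
  have "F ` N \<in> null_sets lebesgue"
    using sard1[of F] unfolding negligible_iff_null_sets N_def .
  then obtain B where B: "B \<in> null_sets lborel" "F ` N \<subseteq> B"
    unfolding null_sets_completion_iff2 by blast
  define f :: "real \<Rightarrow> real" where "f = (\<lambda>x. indicator {0..1} x / measure lborel {0..1::real})"
  have D: "distributed M lborel (\<lambda>u. F (X u)) (\<lambda>x. ennreal (f x))"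
    unfolding f_def by (rule pit[OF X Fdef cont])
  have Fm: "(\<lambda>u. F (X u)) \<in> measurable M lborel"
    using distributed_measurable[OF D] .
  have Bs: "B \<in> sets borel" using B(1) by (simp add: null_sets_def)
  have fm: "(\<lambda>x. ennreal (f x)) \<in> borel_measurable lborel"
    using distributed_borel_measurable[OF D] by simp
  have a1: "AE x in lborel. x \<notin> B" using B(1) by (rule AE_not_in)
  have "AE x in lborel. 0 < ennreal (f x) \<longrightarrow> x \<notin> B"
    by (rule eventually_mono[OF a1]) simp
  then have "AE x in density lborel (\<lambda>x. ennreal (f x)). x \<notin> B"
    by (subst AE_density[OF fm])
  then have "AE x in distr M lborel (\<lambda>u. F (X u)). x \<notin> B"
    unfolding distributed_distr_eq_density[OF D] .
  then have "AE u in M. F (X u) \<notin> B"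
    by (subst (asm) AE_distr_iff[OF Fm]) (use Bs in auto)
  then show ?thesis
  proof (rule eventually_mono)
    fix u assume "F (X u) \<notin> B"
    then show "\<not> (F has_real_derivative 0) (at (X u))" using B(2) N_def by blast
  qed
qed



lemma sorted_nth_le_iff:
  fixes xs :: "real list"
  assumes s: "sorted xs" and j: "j < length xs"
  shows "xs ! j \<le> t \<longleftrightarrow> Suc j \<le> length (filter (\<lambda>x. x \<le> t) xs)"
proof -
  have L: "length (filter (\<lambda>x. x \<le> t) xs) = card {k. k < length xs \<and> xs ! k \<le> t}"
    by (simp add: length_filter_conv_card)
  show ?thesis
  proof
    assume a: "xs ! j \<le> t"
    have "{..j} \<subseteq> {k. k < length xs \<and> xs ! k \<le> t}"
      using a j sorted_nth_mono[OF s] by (auto intro: order_trans)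
    then have "card {..j} \<le> card {k. k < length xs \<and> xs ! k \<le> t}"
      by (intro card_mono) auto
    then show "Suc j \<le> length (filter (\<lambda>x. x \<le> t) xs)" using L by simp
  next
    assume a: "Suc j \<le> length (filter (\<lambda>x. x \<le> t) xs)"
    show "xs ! j \<le> t"
    proof (rule ccontr)
      assume "\<not> xs ! j \<le> t"
      then have "{k. k < length xs \<and> xs ! k \<le> t} \<subseteq> {..<j}"
        using sorted_nth_mono[OF s] by (auto simp: not_le) (meson le_less_trans linorder_not_le)
      then have "card {k. k < length xs \<and> xs ! k \<le> t} \<le> j"
        using card_mono[of "{..<j}"] by fastforce
      then show False using a L by simp
    qed
  qed
qed

lemma ord_stat_le_iff:
  fixes u :: "real ^ 'd"
  assumes i: "1 \<le> i" "i \<le> CARD('d)"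
  shows "ord_stat u i \<le> t \<longleftrightarrow> i \<le> card {k. u $ k \<le> t}"
proof -
  define m where "m = image_mset (\<lambda>k. u $ k) (mset_set (UNIV :: 'd set))"
  define xs where "xs = sorted_list_of_multiset m"
  have len: "length xs = CARD('d)"
    unfolding xs_def m_def
    by (metis mset_sorted_list_of_multiset size_image_mset size_mset size_mset_set)
  have fl: "length (filter (\<lambda>x. x \<le> t) xs) = card {k. u $ k \<le> t}"
  proof -
    have "length (filter (\<lambda>x. x \<le> t) xs) = size (filter_mset (\<lambda>x. x \<le> t) m)"
      unfolding xs_def by (metis mset_filter mset_sorted_list_of_multiset size_mset)
    also have "\<dots> = size (image_mset (\<lambda>k. u $ k) (filter_mset (\<lambda>k. u $ k \<le> t) (mset_set (UNIV :: 'd set))))"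
      unfolding m_def by (simp add: filter_mset_image_mset)
    also have "\<dots> = card {k. u $ k \<le> t}"
      by (simp add: filter_mset_mset_set)
    finally show ?thesis .
  qed
  have "ord_stat u i = xs ! (i - 1)" unfolding ord_stat_def xs_def m_def ..
  then show ?thesis
    using sorted_nth_le_iff[of xs "i - 1" t] len fl i unfolding xs_def by simp
qed

lemma ord_stat_in:
  fixes u :: "real ^ 'd"
  assumes i: "1 \<le> i" "i \<le> CARD('d)"
  shows "\<exists>k. ord_stat u i = u $ k"
proof -
  define m where "m = image_mset (\<lambda>k. u $ k) (mset_set (UNIV :: 'd set))"
  define xs where "xs = sorted_list_of_multiset m"
  have len: "length xs = CARD('d)"
    unfolding xs_def m_def
    by (metis mset_sorted_list_of_multiset size_image_mset size_mset size_mset_set)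
  have "ord_stat u i = xs ! (i - 1)" unfolding ord_stat_def xs_def m_def ..
  moreover have "xs ! (i - 1) \<in> set xs" using len i by (intro nth_mem) simp
  moreover have "set xs = (\<lambda>k. u $ k) ` UNIV"
    unfolding xs_def m_def by (metis mset_sorted_list_of_multiset set_mset_mset finite_set_mset_mset_set set_image_mset finite_class.finite_UNIV)
  ultimately show ?thesis by auto
qed

lemma ord_stat_measurable:
  assumes i: "1 \<le> i" "i \<le> CARD('d)"
  shows "(\<lambda>u::real^'d. ord_stat u i) \<in> borel_measurable borel"
proof (subst borel_measurable_iff_le, intro allI)
  fix t :: real
  have eq: "{w \<in> space borel. ord_stat (w::real^'d) i \<le> t} =
      (\<Union>S\<in>{S. i \<le> card (S::'d set)}. \<Inter>k\<in>S. {w. w $ k \<le> t})"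
  proof -
    have "i \<le> card {k. w $ k \<le> t} \<longleftrightarrow> (\<exists>S. i \<le> card S \<and> (\<forall>k\<in>S. w $ k \<le> t))" for w :: "real^'d"
    proof
      assume "i \<le> card {k. w $ k \<le> t}" then show "\<exists>S. i \<le> card S \<and> (\<forall>k\<in>S. w $ k \<le> t)" by blast
    next
      assume "\<exists>S. i \<le> card S \<and> (\<forall>k\<in>S. w $ k \<le> t)"
      then obtain S where "i \<le> card S" "\<forall>k\<in>S. w $ k \<le> t" by blast
      then have "card S \<le> card {k. w $ k \<le> t}" by (intro card_mono) auto
      then show "i \<le> card {k. w $ k \<le> t}" using \<open>i \<le> card S\<close> by simp
    qed
    then show ?thesis using ord_stat_le_iff[OF i] by auto
  qed
  have cl: "{w::real^'d. w $ k \<le> t} \<in> sets borel" for k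
    by (intro borel_closed closed_Collect_le continuous_on_component continuous_on_id continuous_on_const)
  show "{w \<in> space borel. ord_stat (w::real^'d) i \<le> t} \<in> sets borel"
    unfolding eq
  proof (intro sets.finite_UN sets.finite_INT cl)
    show "finite {S. i \<le> card (S::'d set)}" by simp
  next
    fix S :: "'d set" assume "S \<in> {S. i \<le> card S}"
    then show "S \<noteq> {}" using i by auto
  qed simp
qed



lemma cm_basic:
  assumes "copula_measure C M"
  shows "prob_space M" "sets M = sets borel" "space M = UNIV"
  using assms unfolding copula_measure_def by (auto dest: sets_eq_imp_space_eq)

lemma coord_null:
  fixes M :: "(real^'d) measure"
  assumes cm: "copula_measure C M"
  shows "{u. u $ k = x} \<in> null_sets M"
proof -
  interpret prob_space M using cm_basic[OF cm] by simp
  have sM: "sets M = sets borel" "space M = UNIV" using cm_basic[OF cm] by auto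
  have Xm: "(\<lambda>u::real^'d. u $ k) \<in> borel_measurable M"
  proof -
    have "(\<lambda>u::real^'d. u $ k) \<in> borel_measurable borel"
      by (intro borel_measurable_continuous_onI continuous_on_component continuous_on_id)
    then show ?thesis using measurable_cong_sets[OF sM(1) refl] by blast
  qed
  define \<nu> where "\<nu> = distr M borel (\<lambda>u::real^'d. u $ k)"
  interpret rd: real_distribution \<nu> unfolding \<nu>_def using Xm by simp
  have cdf: "cdf \<nu> = (\<lambda>t. max 0 (min t 1))"
  proof
    fix t
    have "cdf \<nu> t = measure M ((\<lambda>u::real^'d. u $ k) -` {..t} \<inter> space M)"
      unfolding cdf_def \<nu>_def by (rule measure_distr[OF Xm]) simp
    also have "(\<lambda>u::real^'d. u $ k) -` {..t} \<inter> space M = {u. u $ k \<le> t}" using sM by auto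
    finally show "cdf \<nu> t = max 0 (min t 1)" using cm unfolding copula_measure_def by simp
  qed
  have "isCont (cdf \<nu>) x" unfolding cdf by (intro continuous_intros)
  then have "measure \<nu> {x} = 0" using rd.isCont_cdf by simp
  moreover have "measure \<nu> {x} = measure M ((\<lambda>u::real^'d. u $ k) -` {x} \<inter> space M)"
    unfolding \<nu>_def by (rule measure_distr[OF Xm]) simp
  moreover have "(\<lambda>u::real^'d. u $ k) -` {x} \<inter> space M = {u. u $ k = x}" using sM by auto
  ultimately have "measure M {u. u $ k = x} = 0" by simp
  moreover have "{u. u $ k = x} \<in> sets M"
    using measurable_sets[OF Xm, of "{x}"] sM by (simp add: vimage_def)
  ultimately show ?thesis by (simp add: emeasure_eq_measure null_sets_def)
qed

lemma delta_cont:
  fixes M :: "(real^'d) measure"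
  assumes cm: "copula_measure C M" and i: "1 \<le> i" "i \<le> CARD('d)"
  shows "continuous_on UNIV (\<lambda>t. measure M {u. ord_stat u i \<le> t})"
proof -
  interpret prob_space M using cm_basic[OF cm] by simp
  have sM: "sets M = sets borel" "space M = UNIV" using cm_basic[OF cm] by auto
  have Xm: "(\<lambda>u::real^'d. ord_stat u i) \<in> borel_measurable M"
    using measurable_cong_sets[OF sM(1) refl] ord_stat_measurable[OF i] by blast
  define \<nu> where "\<nu> = distr M borel (\<lambda>u::real^'d. ord_stat u i)"
  interpret rd: real_distribution \<nu> unfolding \<nu>_def using Xm by simp
  have cdf: "cdf \<nu> = (\<lambda>t. measure M {u. ord_stat u i \<le> t})"
  proof
    fix t
    have "cdf \<nu> t = measure M ((\<lambda>u::real^'d. ord_stat u i) -` {..t} \<inter> space M)"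
      unfolding cdf_def \<nu>_def by (rule measure_distr[OF Xm]) simp
    also have "(\<lambda>u::real^'d. ord_stat u i) -` {..t} \<inter> space M = {u. ord_stat u i \<le> t}" using sM by auto
    finally show "cdf \<nu> t = measure M {u. ord_stat u i \<le> t}" .
  qed
  have "isCont (cdf \<nu>) x" for x
  proof -
    have nU: "(\<Union>k\<in>UNIV. {u::real^'d. u $ k = x}) \<in> null_sets M"
      by (rule null_sets_UN') (simp_all add: coord_null[OF cm])
    have sub: "{u. ord_stat u i = x} \<subseteq> (\<Union>k\<in>UNIV. {u::real^'d. u $ k = x})"
    proof
      fix u :: "real^'d" assume "u \<in> {u. ord_stat u i = x}"
      moreover obtain k where "ord_stat u i = u $ k" using ord_stat_in[OF i] by blast
      ultimately show "u \<in> (\<Union>k\<in>UNIV. {u::real^'d. u $ k = x})" by auto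
    qed
    have sm: "{u. ord_stat u i = x} \<in> sets M"
      using measurable_sets[OF Xm, of "{x}"] sM by (simp add: vimage_def)
    have "{u. ord_stat u i = x} \<in> null_sets M" by (rule null_sets_subset[OF nU sm sub])
    then have m0: "measure M {u. ord_stat u i = x} = 0" by (simp add: measure_def null_sets_def)
    have "measure \<nu> {x} = measure M ((\<lambda>u::real^'d. ord_stat u i) -` {x} \<inter> space M)"
      unfolding \<nu>_def by (rule measure_distr[OF Xm]) simp
    moreover have "(\<lambda>u::real^'d. ord_stat u i) -` {x} \<inter> space M = {u. ord_stat u i = x}" using sM by auto
    ultimately have "measure \<nu> {x} = 0" using m0 by simp
    then show ?thesis using rd.isCont_cdf[of x] by blast
  qed
  then show ?thesis unfolding cdf[symmetric] by (simp add: continuous_on_eq_continuous_at)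
qed



lemma density_eq:
  fixes M :: "(real^'d) measure"
  assumes cm: "copula_measure C M" and cd: "copula_density C c"
  shows "M = density lborel (\<lambda>u. ennreal (c u))"
proof -
  interpret prob_space M using cm_basic[OF cm] by simp
  have sM: "sets M = sets borel" "space M = UNIV" using cm_basic[OF cm] by auto
  have cm': "c \<in> borel_measurable lborel" using cd unfolding copula_density_def by simp
  define E where "E = range (\<lambda>a::real^'d. {..a})"
  define A where "A = (\<lambda>n::nat. {..(\<chi> k. real n) :: real^'d})"
  show ?thesis
  proof (rule measure_eqI_generator_eq[where \<Omega>=UNIV and E=E and A=A])
    show "Int_stable E" unfolding E_def Int_stable_def
    proof (clarify)
      fix a b :: "real^'d"
      have "{..a} \<inter> {..b} = {..inf a b}" by auto
      then show "{..a} \<inter> {..b} \<in> range atMost" by simp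
    qed
    show "E \<subseteq> Pow UNIV" by simp
  next
    fix X assume "X \<in> E"
    then obtain x where X: "X = {..x}" unfolding E_def by auto
    have o: "{..x} = {u. \<forall>k. u $ k \<le> x $ k}" by (auto simp: less_eq_vec_def)
    have "emeasure M {..x} = ennreal (measure M {..x})" by (simp add: emeasure_eq_measure)
    also have "\<dots> = ennreal (C x)" using cm unfolding copula_measure_def o by simp
    also have "\<dots> = (\<integral>\<^sup>+ u \<in> {u. \<forall>k. u $ k \<le> x $ k}. ennreal (c u) \<partial>lborel)"
      using cd unfolding copula_density_def by simp
    also have "\<dots> = emeasure (density lborel (\<lambda>u. ennreal (c u))) {..x}"
      using cm' by (subst emeasure_density) (auto simp: o)
    finally show "emeasure M X = emeasure (density lborel (\<lambda>u. ennreal (c u))) X" using X by simp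
  next
    show "sets M = sigma_sets UNIV E"
      unfolding sM E_def by (subst borel_eq_atMost) simp
    show "sets (density lborel (\<lambda>u. ennreal (c u))) = sigma_sets UNIV E"
      unfolding E_def by (simp, subst borel_eq_atMost) simp
    show "range A \<subseteq> E" unfolding A_def E_def by auto
    show "(\<Union>i. A i) = UNIV"
    proof (rule set_eqI, rule iffI)
      fix u :: "real^'d"
      obtain n :: nat where n: "Max (range (\<lambda>k. u $ k)) \<le> real n" using real_arch_simple by blast
      have "u \<le> (\<chi> k. real n)" unfolding less_eq_vec_def
        using n by (auto intro: order_trans[OF Max_ge])
      then show "u \<in> (\<Union>i. A i)" unfolding A_def by auto
    qed simp
    show "emeasure M (A i) \<noteq> \<infinity>" for i by simp
  qed
qed



theorem mainTheorem16:
  fixes C :: "real ^ 'd \<Rightarrow> real" and c :: "real ^ 'd \<Rightarrow> real" and \<delta> :: "nat \<Rightarrow> real \<Rightarrow> real"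
  assumes "is_copula C"
    and "copula_density C c"
    and "is_multidiagonal C \<delta>"
  shows "AE u in lborel. u \<in> unit_cube \<longrightarrow> c u * indicator (Z_set \<delta>) u = 0"
proof -
  obtain M where cm: "copula_measure C M"
    and dd: "\<forall>i\<in>{1..CARD('d)}. \<forall>t. \<delta> i t = measure M {u. ord_stat u i \<le> t}"
    using assms(3) unfolding is_multidiagonal_def by blast
  interpret prob_space M using cm_basic[OF cm] by simp
  have sM: "sets M = sets borel" "space M = UNIV" using cm_basic[OF cm] by auto
  have AEi: "AE u in M. \<not> (\<delta> i has_real_derivative 0) (at (ord_stat u i))"
    if i: "i \<in> {1..CARD('d)}" for i
  proof -
    have i': "1 \<le> i" "i \<le> CARD('d)" using i by auto
    have Xm: "(\<lambda>u::real^'d. ord_stat u i) \<in> borel_measurable M"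
      using measurable_cong_sets[OF sM(1) refl] ord_stat_measurable[OF i'] by blast
    have eq: "\<delta> i = (\<lambda>t. measure M {u. ord_stat u i \<le> t})" using dd i by auto
    have Fdef: "\<And>t. \<delta> i t = measure M {u\<in>space M. ord_stat u i \<le> t}" using eq sM by simp
    have cont: "continuous_on UNIV (\<delta> i)" unfolding eq by (rule delta_cont[OF cm i'])
    show ?thesis by (rule deriv_zero_null[OF Xm Fdef cont])
  qed
  have AEall: "AE u in M. \<forall>i\<in>{1..CARD('d)}. \<not> (\<delta> i has_real_derivative 0) (at (ord_stat u i))"
    by (rule AE_finite_allI) (simp_all add: AEi)
  have Md: "M = density lborel (\<lambda>u. ennreal (c u))" by (rule density_eq[OF cm assms(2)])
  have "AE u in density lborel (\<lambda>u. ennreal (c u)). \<forall>i\<in>{1..CARD('d)}. \<not> (\<delta> i has_real_derivative 0) (at (ord_stat u i))"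
    using AEall unfolding Md[symmetric] .
  moreover have cm': "c \<in> borel_measurable lborel" using assms(2) unfolding copula_density_def by simp
  ultimately have A1: "AE u in lborel. 0 < ennreal (c u) \<longrightarrow> (\<forall>i\<in>{1..CARD('d)}. \<not> (\<delta> i has_real_derivative 0) (at (ord_stat u i)))"
    by (subst (asm) AE_density) auto
  have A2: "AE u in lborel. 0 \<le> c u" using assms(2) unfolding copula_density_def by simp
  from A1 A2 show ?thesis
  proof eventually_elim
    case (elim u)
    show ?case
    proof (cases "c u = 0")
      case False
      then have "0 < c u" using elim(2) by simp
      then have "u \<notin> Z_set \<delta>" using elim(1) unfolding Z_set_def by auto
      then show ?thesis by simp
    qed simp
  qed
qed

end
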